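(* For a Tychonoff space $X$ the following are equivalent: (i) the strong dual $L(X)_\beta$ of $C_p(X)$ has a bounded resolution; (ii) $L(X)_\beta$ has a fundamental bounded resolution; (iii) $X$ is countable.
   Context: $C_p(X)$ is the space of continuous real-valued functions on $X$ with the pointwise topology. Its topological dual is identified with $L(X)$, the vector space with Hamel basis $X$ (finite linear combinations of point evaluations); $L(X)_\beta$ denotes it with the strong topology $\beta(L(X),C(X))$ of uniform convergence on bounded subsets of $C_p(X)$. Order $\mathbb{N}^{\mathbb{N}}$ pointwise. A bounded resolution of a locally convex space $F$ is a family $\{B_\alpha:\alpha\in\mathbb{N}^{\mathbb{N}}\}$ of bounded sets covering $F$ with $B_\alpha\subseteq B_\beta$ whenever $\alpha\le\beta$; it is fundamental if every bounded subset of $F$ lies in some $B_\alpha$. *)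

theory Defs
  imports "HOL-Analysis.Analysis"
begin

definition tychonoff_space :: "'a topology \<Rightarrow> bool" where
  "tychonoff_space X \<longleftrightarrow> completely_regular_space X \<and> Hausdorff_space X"

definition Cfun :: "'a topology \<Rightarrow> ('a \<Rightarrow> real) set" where
  "Cfun X = {f. continuous_map X euclideanreal f}"

text \<open>Bounded subsets of C_p(X) (pointwise topology): a set is bounded iff every
  defining seminorm f \<mapsto> |f x| (x in X) is bounded on it.\<close>
definition Cp_bounded :: "'a topology \<Rightarrow> ('a \<Rightarrow> real) set \<Rightarrow> bool" where
  "Cp_bounded X A \<longleftrightarrow> A \<subseteq> Cfun X \<and> (\<forall>x\<in>topspace X. \<exists>c. \<forall>f\<in>A. \<bar>f x\<bar> \<le> c)"

text \<open>L(X): the free vector space with Hamel basis X, i.e. finitely supported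
  real coefficient functions on the points of X.\<close>
definition Lsupp :: "('a \<Rightarrow> real) \<Rightarrow> 'a set" where
  "Lsupp \<mu> = {x. \<mu> x \<noteq> 0}"

definition LX :: "'a topology \<Rightarrow> ('a \<Rightarrow> real) set" where
  "LX X = {\<mu>. finite (Lsupp \<mu>) \<and> Lsupp \<mu> \<subseteq> topspace X}"

text \<open>Duality pairing: \<mu> = sum of \<mu>(x) \<delta>_x acts on f as sum of \<mu>(x) f(x).\<close>
definition Lpair :: "('a \<Rightarrow> real) \<Rightarrow> ('a \<Rightarrow> real) \<Rightarrow> real" where
  "Lpair \<mu> f = (\<Sum>x\<in>Lsupp \<mu>. \<mu> x * f x)"

text \<open>Bounded subsets of L(X)_beta: the strong topology is generated by the seminorms
  p_A(\<mu>) = sup over f in A of |<\<mu>,f>|, A bounded in C_p(X); a set is bounded iff each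
  of these seminorms is bounded on it.\<close>
definition Lbeta_bounded :: "'a topology \<Rightarrow> ('a \<Rightarrow> real) set \<Rightarrow> bool" where
  "Lbeta_bounded X B \<longleftrightarrow> B \<subseteq> LX X \<and>
     (\<forall>A. Cp_bounded X A \<longrightarrow> (\<exists>c. \<forall>\<mu>\<in>B. \<forall>f\<in>A. \<bar>Lpair \<mu> f\<bar> \<le> c))"

definition Lbeta_bounded_resolution ::
    "'a topology \<Rightarrow> ((nat \<Rightarrow> nat) \<Rightarrow> ('a \<Rightarrow> real) set) \<Rightarrow> bool" where
  "Lbeta_bounded_resolution X B \<longleftrightarrow>
     (\<forall>\<alpha>. Lbeta_bounded X (B \<alpha>)) \<and>
     (\<Union>\<alpha>. B \<alpha>) = LX X \<and>
     (\<forall>\<alpha> \<beta>. (\<forall>n. \<alpha> n \<le> \<beta> n) \<longrightarrow> B \<alpha> \<subseteq> B \<beta>)"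

definition Lbeta_fundamental_bounded_resolution ::
    "'a topology \<Rightarrow> ((nat \<Rightarrow> nat) \<Rightarrow> ('a \<Rightarrow> real) set) \<Rightarrow> bool" where
  "Lbeta_fundamental_bounded_resolution X B \<longleftrightarrow>
     Lbeta_bounded_resolution X B \<and>
     (\<forall>S. Lbeta_bounded X S \<longrightarrow> (\<exists>\<alpha>. S \<subseteq> B \<alpha>))"

end

theory Submission
  imports Defs
begin


lemma tych_fun:
  assumes T: "tychonoff_space X" and C: "closedin X C" and x: "x \<in> topspace X - C"
  shows "\<exists>g. continuous_map X euclideanreal g \<and> g x = 1 \<and> (\<forall>y\<in>C. g y = 0)
          \<and> (\<forall>y\<in>topspace X. 0 \<le> g y \<and> g y \<le> 1)"
proof -
  from T have "completely_regular_space X" by (simp add: tychonoff_space_def)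
  then obtain f :: "'a \<Rightarrow> real" where f: "continuous_map X (top_of_set {0..1}) f" "f x = 0" "f ` C \<subseteq> {1}"
    using C x unfolding completely_regular_space_def by blast
  have fc: "continuous_map X euclideanreal f" and fr: "\<forall>y\<in>topspace X. f y \<in> {0..1}"
    using f(1) by (auto simp: continuous_map_in_subtopology)
  have "continuous_map X euclideanreal (\<lambda>y. 1 - f y)"
    by (intro continuous_intros fc)
  then show ?thesis using f fr by (intro exI[of _ "\<lambda>y. 1 - f y"]) auto
qed

lemma finite_closed:
  assumes T: "tychonoff_space X" "finite S" "S \<subseteq> topspace X"
  shows "closedin X S"
  using T Hausdorff_imp_t1_space t1_space_closedin_finite unfolding tychonoff_space_def by blast



lemma step_lemma:
  assumes T: "tychonoff_space X" and D: "D \<subseteq> topspace X" and W: "openin X W"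
    and inf: "infinite (D \<inter> W)"
  shows "\<exists>z U W'. z \<in> D \<inter> W \<and> openin X U \<and> z \<in> U \<and> U \<subseteq> W \<and> openin X W' \<and> W' \<subseteq> W
            \<and> U \<inter> W' = {} \<and> infinite (D \<inter> W')"
proof -
  obtain a where a: "a \<in> D \<inter> W" using inf by (metis finite.emptyI ex_in_conv)
  have "infinite (D \<inter> W - {a})" using inf by simp
  then obtain b where b: "b \<in> D \<inter> W" "b \<noteq> a" by (metis Diff_iff finite.emptyI ex_in_conv insertI1)
  have cb: "closedin X {b}" using finite_closed[OF T, of "{b}"] b D by auto
  obtain g where g: "continuous_map X euclideanreal g" "g a = 1" "g b = 0"
    using tych_fun[OF T cb, of a] a b D by auto
  define Hi where "Hi = {x \<in> topspace X. g x \<in> {2/3<..}} \<inter> W"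
  define Lo where "Lo = {x \<in> topspace X. g x \<in> {..<1/3}} \<inter> W"
  define M1 where "M1 = {x \<in> topspace X. g x \<in> {1/3<..}} \<inter> W"
  define M2 where "M2 = {x \<in> topspace X. g x \<in> {..<2/3}} \<inter> W"
  have oHi: "openin X Hi" unfolding Hi_def
    by (intro openin_Int W openin_continuous_map_preimage[OF g(1)]) auto
  have oLo: "openin X Lo" unfolding Lo_def
    by (intro openin_Int W openin_continuous_map_preimage[OF g(1)]) auto
  have oM1: "openin X M1" unfolding M1_def
    by (intro openin_Int W openin_continuous_map_preimage[OF g(1)]) auto
  have oM2: "openin X M2" unfolding M2_def
    by (intro openin_Int W openin_continuous_map_preimage[OF g(1)]) auto
  have "D \<inter> W \<subseteq> (D \<inter> M1) \<union> (D \<inter> M2)" using D unfolding M1_def M2_def by force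
  hence "infinite (D \<inter> M1) \<or> infinite (D \<inter> M2)" using inf finite_subset by blast
  then show ?thesis
  proof
    assume i: "infinite (D \<inter> M1)"
    show ?thesis
      apply (rule exI[of _ b], rule exI[of _ Lo], rule exI[of _ M1])
      using i oLo oM1 b g D unfolding Lo_def M1_def by auto
  next
    assume i: "infinite (D \<inter> M2)"
    show ?thesis
      apply (rule exI[of _ a], rule exI[of _ Hi], rule exI[of _ M2])
      using i oHi oM2 a g D unfolding Hi_def M2_def by auto
  qed
qed



lemma disj_seq:
  assumes T: "tychonoff_space X" and D: "D \<subseteq> topspace X" and inf: "infinite D"
  shows "\<exists>z V. (\<forall>n::nat. z n \<in> D \<and> openin X (V n) \<and> z n \<in> V n) \<and>
               (\<forall>m n. m \<noteq> n \<longrightarrow> V m \<inter> V n = {})"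
proof -
  define Q where "Q = (\<lambda>W (t :: 'a \<times> 'a set \<times> 'a set). case t of (z, U, W') \<Rightarrow>
     z \<in> D \<inter> W \<and> openin X U \<and> z \<in> U \<and> U \<subseteq> W \<and> openin X W' \<and> W' \<subseteq> W
            \<and> U \<inter> W' = {} \<and> infinite (D \<inter> W'))"
  define S where "S = (\<lambda>W. SOME t. Q W t)"
  have SQ: "Q W (S W)" if "openin X W" "infinite (D \<inter> W)" for W
  proof -
    from step_lemma[OF T D that] obtain z U W' where "Q W (z, U, W')" unfolding Q_def by auto
    thus ?thesis unfolding S_def by (rule someI)
  qed
  define Ws where "Ws = rec_nat (topspace X) (\<lambda>n W. snd (snd (S W)))"
  have Ws0: "Ws 0 = topspace X" and WsS: "\<And>n. Ws (Suc n) = snd (snd (S (Ws n)))"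
    unfolding Ws_def by simp_all
  have good: "openin X (Ws n) \<and> infinite (D \<inter> Ws n)" for n
  proof (induction n)
    case 0 then show ?case using D inf by (simp add: Ws0 Int_absorb2)
  next
    case (Suc n)
    have "Q (Ws n) (S (Ws n))" using SQ Suc by blast
    then show ?case unfolding WsS Q_def by (auto split: prod.splits)
  qed
  have QQ: "Q (Ws n) (S (Ws n))" for n using SQ good by blast
  define z where "z = (\<lambda>n. fst (S (Ws n)))"
  define V where "V = (\<lambda>n. fst (snd (S (Ws n))))"
  have P: "z n \<in> D \<inter> Ws n \<and> openin X (V n) \<and> z n \<in> V n \<and> V n \<subseteq> Ws n \<and> V n \<inter> Ws (Suc n) = {}
           \<and> Ws (Suc n) \<subseteq> Ws n" for n
    using QQ[of n] unfolding z_def V_def WsS Q_def by (auto split: prod.splits)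
  have dec: "Ws n \<subseteq> Ws m" if "m \<le> n" for m n
    using that
  proof (induction n)
    case 0 then show ?case by simp
  next
    case (Suc n)
    have "Ws (Suc n) \<subseteq> Ws n" using P[of n] by blast
    show ?case
    proof (cases "m = Suc n")
      case False
      then have "m \<le> n" using Suc.prems by linarith
      then show ?thesis using Suc.IH \<open>Ws (Suc n) \<subseteq> Ws n\<close> by blast
    qed simp
  qed
  have disj: "V m \<inter> V n = {}" if "m < n" for m n
  proof -
    have "V n \<subseteq> Ws (Suc m)" using P[of n] dec[of "Suc m" n] that by auto
    thus ?thesis using P[of m] by auto
  qed
  have A: "\<forall>n. z n \<in> D \<and> openin X (V n) \<and> z n \<in> V n" using P by blast
  have B: "\<forall>m n. m \<noteq> n \<longrightarrow> V m \<inter> V n = {}"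
  proof (intro allI impI)
    fix m n :: nat assume "m \<noteq> n"
    then consider "m < n" | "n < m" by linarith
    then show "V m \<inter> V n = {}"
    proof cases
      case 1 then show ?thesis using disj by blast
    next
      case 2 then show ?thesis using disj[of n m] by blast
    qed
  qed
  have "(\<forall>n. z n \<in> D \<and> openin X (V n) \<and> z n \<in> V n) \<and>
               (\<forall>m n. m \<noteq> n \<longrightarrow> V m \<inter> V n = {})" using A B by (rule conjI)
  then show ?thesis by (rule exI[where x=z, OF exI[where x=V]])
qed



lemma K_bounded:
  assumes F: "finite F" "F \<subseteq> topspace X"
  shows "Lbeta_bounded X {\<mu> \<in> LX X. Lsupp \<mu> \<subseteq> F \<and> (\<forall>x. \<bar>\<mu> x\<bar> \<le> M)}"
  unfolding Lbeta_bounded_def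
proof (intro conjI allI impI)
  show "{\<mu> \<in> LX X. Lsupp \<mu> \<subseteq> F \<and> (\<forall>x. \<bar>\<mu> x\<bar> \<le> M)} \<subseteq> LX X" by blast
next
  fix A assume A: "Cp_bounded X A"
  then have "\<forall>x\<in>topspace X. \<exists>c. \<forall>f\<in>A. \<bar>f x\<bar> \<le> c" unfolding Cp_bounded_def by blast
  then obtain cx where cx: "\<And>x f. x \<in> topspace X \<Longrightarrow> f \<in> A \<Longrightarrow> \<bar>f x\<bar> \<le> cx x"
    by metis
  show "\<exists>c. \<forall>\<mu>\<in>{\<mu> \<in> LX X. Lsupp \<mu> \<subseteq> F \<and> (\<forall>x. \<bar>\<mu> x\<bar> \<le> M)}. \<forall>f\<in>A. \<bar>Lpair \<mu> f\<bar> \<le> c"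
  proof (intro exI[of _ "\<Sum>x\<in>F. \<bar>M\<bar> * \<bar>cx x\<bar>"] ballI)
    fix \<mu> f assume \<mu>: "\<mu> \<in> {\<mu> \<in> LX X. Lsupp \<mu> \<subseteq> F \<and> (\<forall>x. \<bar>\<mu> x\<bar> \<le> M)}" and f: "f \<in> A"
    have "\<bar>Lpair \<mu> f\<bar> \<le> (\<Sum>x\<in>Lsupp \<mu>. \<bar>\<mu> x * f x\<bar>)" unfolding Lpair_def by (rule sum_abs)
    also have "\<dots> \<le> (\<Sum>x\<in>Lsupp \<mu>. \<bar>M\<bar> * \<bar>cx x\<bar>)"
    proof (rule sum_mono)
      fix x assume x: "x \<in> Lsupp \<mu>"
      have xt: "x \<in> topspace X" using x \<mu> F by auto
      have "\<bar>\<mu> x\<bar> \<le> M" using \<mu> by blast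
      hence "\<bar>\<mu> x\<bar> \<le> \<bar>M\<bar>" by linarith
      moreover have "\<bar>f x\<bar> \<le> \<bar>cx x\<bar>" using cx[OF xt f] by linarith
      ultimately show "\<bar>\<mu> x * f x\<bar> \<le> \<bar>M\<bar> * \<bar>cx x\<bar>"
        by (simp add: abs_mult mult_mono')
    qed
    also have "\<dots> \<le> (\<Sum>x\<in>F. \<bar>M\<bar> * \<bar>cx x\<bar>)"
      by (rule sum_mono2) (use F \<mu> in auto)
    finally show "\<bar>Lpair \<mu> f\<bar> \<le> (\<Sum>x\<in>F. \<bar>M\<bar> * \<bar>cx x\<bar>)" .
  qed
qed

lemma LX_subset: "\<mu> \<in> LX X \<Longrightarrow> Lsupp \<mu> \<subseteq> topspace X" and LX_fin: "\<mu> \<in> LX X \<Longrightarrow> finite (Lsupp \<mu>)"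
  unfolding LX_def by auto

lemma bnd_fin:
  assumes T: "tychonoff_space X" and S: "Lbeta_bounded X S"
  shows "finite (\<Union>\<mu>\<in>S. Lsupp \<mu>)"
proof (rule ccontr)
  define D where "D = (\<Union>\<mu>\<in>S. Lsupp \<mu>)"
  assume "infinite (\<Union>\<mu>\<in>S. Lsupp \<mu>)"
  hence inf: "infinite D" unfolding D_def .
  have SL: "S \<subseteq> LX X" using S unfolding Lbeta_bounded_def by blast
  have Dt: "D \<subseteq> topspace X" using SL LX_subset unfolding D_def by blast
  obtain z V where zV: "\<And>n::nat. z n \<in> D \<and> openin X (V n) \<and> z n \<in> V n"
    and disj: "\<And>m n. m \<noteq> n \<Longrightarrow> V m \<inter> V n = {}"
    using disj_seq[OF T Dt inf] by blast
  define \<mu> where "\<mu> = (\<lambda>n. SOME \<mu>. \<mu> \<in> S \<and> z n \<in> Lsupp \<mu>)"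
  have \<mu>S: "\<mu> n \<in> S \<and> z n \<in> Lsupp (\<mu> n)" for n
  proof -
    have "\<exists>\<nu>. \<nu> \<in> S \<and> z n \<in> Lsupp \<nu>" using zV[of n] unfolding D_def by blast
    thus ?thesis unfolding \<mu>_def by (rule someI_ex)
  qed
  define G where "G = (\<lambda>n. Lsupp (\<mu> n) - {z n})"
  define Op where "Op = (\<lambda>n. V n - G n)"
  have Gfin: "finite (G n)" and Gt: "G n \<subseteq> topspace X" for n
    using \<mu>S[of n] SL LX_subset LX_fin unfolding G_def by blast+
  have Oo: "openin X (Op n)" for n
    unfolding Op_def using zV[of n] finite_closed[OF T Gfin Gt] by (simp add: openin_diff)
  have Cc: "closedin X (topspace X - Op n)" for n
    using Oo by (simp add: closedin_diff)
  have zO: "z n \<in> topspace X - (topspace X - Op n)" for n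
    using zV[of n] Dt unfolding Op_def G_def by auto
  have "\<forall>n. \<exists>g. continuous_map X euclideanreal g \<and> g (z n) = 1 \<and> (\<forall>y\<in>topspace X - Op n. g y = 0)
          \<and> (\<forall>y\<in>topspace X. 0 \<le> g y \<and> g y \<le> 1)"
    using tych_fun[OF T Cc zO] by blast
  then obtain g where g: "\<And>n. continuous_map X euclideanreal (g n)" "\<And>n. g n (z n) = 1"
     "\<And>n y. y \<in> topspace X - Op n \<Longrightarrow> g n y = 0" "\<And>n y. y \<in> topspace X \<Longrightarrow> 0 \<le> g n y \<and> g n y \<le> 1"
    by metis
  define c where "c = (\<lambda>n. real n / \<bar>\<mu> n (z n)\<bar>)"
  have c0: "c n \<ge> 0" for n unfolding c_def by simp
  define h where "h = (\<lambda>n x. c n * g n x)"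
  have pair: "\<bar>Lpair (\<mu> n) (h n)\<bar> = real n" for n
  proof -
    have fin: "finite (Lsupp (\<mu> n))" using \<mu>S[of n] SL LX_fin by blast
    have z: "z n \<in> Lsupp (\<mu> n)" using \<mu>S by blast
    have rest: "(\<Sum>x\<in>Lsupp (\<mu> n) - {z n}. \<mu> n x * h n x) = 0"
    proof (rule sum.neutral, rule ballI)
      fix x assume x: "x \<in> Lsupp (\<mu> n) - {z n}"
      hence "x \<in> topspace X - Op n" using Gt[of n] unfolding Op_def G_def by auto
      thus "\<mu> n x * h n x = 0" unfolding h_def using g(3) by simp
    qed
    have "Lpair (\<mu> n) (h n) = \<mu> n (z n) * h n (z n)"
      unfolding Lpair_def using sum.remove[OF fin z, of "\<lambda>x. \<mu> n x * h n x"] rest by simp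
    also have "\<dots> = \<mu> n (z n) * c n" unfolding h_def using g(2) by simp
    finally have "\<bar>Lpair (\<mu> n) (h n)\<bar> = \<bar>\<mu> n (z n)\<bar> * c n" using c0[of n] by (simp add: abs_mult)
    moreover have "\<mu> n (z n) \<noteq> 0" using z unfolding Lsupp_def by simp
    ultimately show ?thesis unfolding c_def by simp
  qed
  have Ab: "Cp_bounded X (range h)"
    unfolding Cp_bounded_def
  proof (intro conjI ballI)
    show "range h \<subseteq> Cfun X" unfolding Cfun_def h_def
      using g(1) by (auto intro!: continuous_intros)
  next
    fix x assume x: "x \<in> topspace X"
    define b where "b = (if \<exists>k. x \<in> V k then c (SOME k. x \<in> V k) else 0)"
    show "\<exists>b. \<forall>f\<in>range h. \<bar>f x\<bar> \<le> b"
    proof (intro exI[of _ b] ballI)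
      fix f assume "f \<in> range h"
      then obtain m where f: "f = h m" by blast
      show "\<bar>f x\<bar> \<le> b"
      proof (cases "x \<in> Op m")
        case True
        then have xm: "x \<in> V m" unfolding Op_def by blast
        have "(SOME k. x \<in> V k) = m"
        proof (rule some_equality)
          fix k assume "x \<in> V k" thus "k = m" using xm disj by blast
        qed (rule xm)
        hence b: "b = c m" unfolding b_def using xm by auto
        have "\<bar>f x\<bar> = c m * g m x" unfolding f h_def using g(4)[OF x] c0 by (simp add: abs_mult)
        also have "\<dots> \<le> c m * 1" using g(4)[OF x] c0[of m] by (intro mult_left_mono) auto
        finally show ?thesis using b by simp
      next
        case False
        hence "g m x = 0" using g(3) x by blast
        moreover have "b \<ge> 0" unfolding b_def using c0 by simp
        ultimately show ?thesis unfolding f h_def by simp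
      qed
    qed
  qed
  obtain c1 where c1: "\<And>\<nu> f. \<nu> \<in> S \<Longrightarrow> f \<in> range h \<Longrightarrow> \<bar>Lpair \<nu> f\<bar> \<le> c1"
    using S Ab unfolding Lbeta_bounded_def by blast
  obtain n :: nat where "c1 < real n" using reals_Archimedean2 by blast
  moreover have "\<bar>Lpair (\<mu> n) (h n)\<bar> \<le> c1" using \<mu>S by (intro c1) auto
  hence "real n \<le> c1" using pair[of n] by linarith
  ultimately show False by linarith
qed



lemma bnd_coef:
  assumes T: "tychonoff_space X" and S: "Lbeta_bounded X S"
  shows "\<exists>M. \<forall>\<mu>\<in>S. \<forall>x. \<bar>\<mu> x\<bar> \<le> M"
proof -
  define F where "F = (\<Union>\<mu>\<in>S. Lsupp \<mu>)"
  have Ff: "finite F" using bnd_fin[OF T S] unfolding F_def .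
  have SL: "S \<subseteq> LX X" using S unfolding Lbeta_bounded_def by blast
  have Ft: "F \<subseteq> topspace X" using SL LX_subset unfolding F_def by blast
  have "\<forall>x\<in>F. \<exists>c. \<forall>\<mu>\<in>S. \<bar>\<mu> x\<bar> \<le> c"
  proof
    fix x assume x: "x \<in> F"
    have Cc: "closedin X (F - {x})" using finite_closed[OF T] Ff Ft by auto
    obtain g where g: "continuous_map X euclideanreal g" "g x = 1" "\<forall>y\<in>F - {x}. g y = 0"
      using tych_fun[OF T Cc, of x] x Ft by auto
    have Ab: "Cp_bounded X {g}" unfolding Cp_bounded_def Cfun_def using g(1) by auto
    obtain c where c: "\<And>\<nu>. \<nu> \<in> S \<Longrightarrow> \<bar>Lpair \<nu> g\<bar> \<le> c"
      using S Ab unfolding Lbeta_bounded_def by blast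
    have "\<bar>\<nu> x\<bar> \<le> c" if \<nu>: "\<nu> \<in> S" for \<nu>
    proof -
      have sub: "Lsupp \<nu> \<subseteq> F" using \<nu> unfolding F_def by blast
      have fin: "finite (Lsupp \<nu>)" using \<nu> SL LX_fin by blast
      have rest: "(\<Sum>y\<in>Lsupp \<nu> - {x}. \<nu> y * g y) = 0"
        using sub g(3) by (intro sum.neutral) auto
      have "Lpair \<nu> g = \<nu> x"
      proof (cases "x \<in> Lsupp \<nu>")
        case True
        then show ?thesis unfolding Lpair_def using sum.remove[OF fin True, of "\<lambda>y. \<nu> y * g y"] rest g(2)
          by simp
      next
        case False
        then have "\<nu> x = 0" unfolding Lsupp_def by simp
        moreover have "Lpair \<nu> g = 0" unfolding Lpair_def using rest False by simp
        ultimately show ?thesis by simp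
      qed
      thus ?thesis using c[OF \<nu>] by simp
    qed
    thus "\<exists>c. \<forall>\<mu>\<in>S. \<bar>\<mu> x\<bar> \<le> c" by blast
  qed
  then obtain cf where cf: "\<And>x \<mu>. x \<in> F \<Longrightarrow> \<mu> \<in> S \<Longrightarrow> \<bar>\<mu> x\<bar> \<le> cf x" by metis
  show ?thesis
  proof (intro exI[of _ "\<Sum>x\<in>F. \<bar>cf x\<bar>"] ballI allI)
    fix \<mu> x assume \<mu>: "\<mu> \<in> S"
    show "\<bar>\<mu> x\<bar> \<le> (\<Sum>x\<in>F. \<bar>cf x\<bar>)"
    proof (cases "x \<in> F")
      case True
      have "\<bar>cf x\<bar> \<le> (\<Sum>x\<in>F. \<bar>cf x\<bar>)" using Ff True by (intro member_le_sum) auto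
      then show ?thesis using cf[OF True \<mu>] by linarith
    next
      case False
      then have "\<mu> x = 0" using \<mu> unfolding F_def Lsupp_def by blast
      then show ?thesis by (simp add: sum_nonneg)
    qed
  qed
qed



lemma bounded_sub:
  assumes T: "tychonoff_space X" and S: "Lbeta_bounded X S"
  obtains F M where "finite F" "F \<subseteq> topspace X" "S \<subseteq> {\<mu>\<in>LX X. Lsupp \<mu> \<subseteq> F \<and> (\<forall>x. \<bar>\<mu> x\<bar> \<le> M)}"
proof -
  have SL: "S \<subseteq> LX X" using S unfolding Lbeta_bounded_def by blast
  obtain M where M: "\<forall>\<mu>\<in>S. \<forall>x. \<bar>\<mu> x\<bar> \<le> M" using bnd_coef[OF T S] by blast
  have f: "finite (\<Union>\<mu>\<in>S. Lsupp \<mu>)" using bnd_fin[OF T S] .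
  have t: "(\<Union>\<mu>\<in>S. Lsupp \<mu>) \<subseteq> topspace X" using SL LX_subset by blast
  have s: "S \<subseteq> {\<mu>\<in>LX X. Lsupp \<mu> \<subseteq> (\<Union>\<mu>\<in>S. Lsupp \<mu>) \<and> (\<forall>x. \<bar>\<mu> x\<bar> \<le> M)}"
    using SL M by blast
  show ?thesis using f t s by (rule that)
qed

lemma Lbeta_bounded_subset: "Lbeta_bounded X S \<Longrightarrow> S' \<subseteq> S \<Longrightarrow> Lbeta_bounded X S'"
  unfolding Lbeta_bounded_def by blast

lemma count_imp_fund:
  assumes T: "tychonoff_space X" and C: "countable (topspace X)"
  shows "\<exists>B. Lbeta_fundamental_bounded_resolution X B"
proof -
  define Ts where "Ts = topspace X"
  define Fs where "Fs = (\<lambda>N::nat. from_nat_into Ts ` {..N} \<inter> Ts)"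
  have Fsfin: "finite (Fs N)" "Fs N \<subseteq> topspace X" for N
    unfolding Fs_def Ts_def by (simp, rule Int_lower2)
  have Fsmono: "Fs N \<subseteq> Fs N'" if "N \<le> N'" for N N'
  proof -
    have "{..N} \<subseteq> {..N'}" using that by simp
    thus ?thesis unfolding Fs_def by (intro Int_mono image_mono subset_refl)
  qed
  have Fscov: "\<exists>N. F \<subseteq> Fs N" if F: "finite F" "F \<subseteq> topspace X" for F
  proof -
    define idx where "idx = to_nat_on Ts"
    have CT: "countable Ts" using C unfolding Ts_def .
    have idx: "from_nat_into Ts (idx x) = x" if "x \<in> F" for x
      unfolding idx_def using from_nat_into_to_nat_on[OF CT] that F(2) unfolding Ts_def by blast
    define N where "N = Max (insert 0 (idx ` F))"
    have "x \<in> Fs N" if x: "x \<in> F" for x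
    proof -
      have "idx x \<in> insert 0 (idx ` F)" using x by blast
      hence "idx x \<le> N" unfolding N_def using F(1) by (intro Max_ge) simp_all
      hence "idx x \<in> {..N}" by simp
      hence "from_nat_into Ts (idx x) \<in> from_nat_into Ts ` {..N}" by (rule imageI)
      hence "x \<in> from_nat_into Ts ` {..N}" using idx[OF x] by simp
      moreover have "x \<in> Ts" using x F unfolding Ts_def by blast
      ultimately show ?thesis unfolding Fs_def by (rule IntI)
    qed
    thus ?thesis by blast
  qed
  define B where "B = (\<lambda>\<alpha>::nat\<Rightarrow>nat. {\<mu>\<in>LX X. Lsupp \<mu> \<subseteq> Fs (\<alpha> 0) \<and> (\<forall>x. \<bar>\<mu> x\<bar> \<le> real (\<alpha> 1))})"
  have Bb: "Lbeta_bounded X (B \<alpha>)" for \<alpha> unfolding B_def by (rule K_bounded[OF Fsfin])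
  have Bmono: "B \<alpha> \<subseteq> B \<beta>" if "\<forall>n. \<alpha> n \<le> \<beta> n" for \<alpha> \<beta>
  proof -
    have "Fs (\<alpha> 0) \<subseteq> Fs (\<beta> 0)" using that Fsmono by blast
    moreover have "real (\<alpha> 1) \<le> real (\<beta> 1)" using that by simp
    ultimately show ?thesis unfolding B_def
    proof (intro subsetI)
      fix \<mu> assume a: "Fs (\<alpha> 0) \<subseteq> Fs (\<beta> 0)" "real (\<alpha> 1) \<le> real (\<beta> 1)"
        and \<mu>: "\<mu> \<in> {\<mu> \<in> LX X. Lsupp \<mu> \<subseteq> Fs (\<alpha> 0) \<and> (\<forall>x. \<bar>\<mu> x\<bar> \<le> real (\<alpha> 1))}"
      have "\<forall>x. \<bar>\<mu> x\<bar> \<le> real (\<alpha> 1)" using \<mu> by blast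
      hence "\<forall>x. \<bar>\<mu> x\<bar> \<le> real (\<beta> 1)" using a(2) by (meson order_trans)
      thus "\<mu> \<in> {\<mu> \<in> LX X. Lsupp \<mu> \<subseteq> Fs (\<beta> 0) \<and> (\<forall>x. \<bar>\<mu> x\<bar> \<le> real (\<beta> 1))}"
        using \<mu> a(1) by blast
    qed
  qed
  have Bfund: "\<exists>\<alpha>. S \<subseteq> B \<alpha>" if S: "Lbeta_bounded X S" for S
  proof -
    obtain F M where FM: "finite F" "F \<subseteq> topspace X" "S \<subseteq> {\<mu>\<in>LX X. Lsupp \<mu> \<subseteq> F \<and> (\<forall>x. \<bar>\<mu> x\<bar> \<le> M)}"
      by (rule bounded_sub[OF T S])
    obtain N where N: "F \<subseteq> Fs N" using Fscov[OF FM(1) FM(2)] by (elim exE)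
    obtain k :: nat where k: "M \<le> real k" using real_arch_simple by blast
    define \<alpha> where "\<alpha> = (\<lambda>i::nat. if i = 0 then N else k)"
    have "S \<subseteq> B \<alpha>"
    proof
      fix \<mu> assume \<mu>: "\<mu> \<in> S"
      hence "\<mu> \<in> {\<mu>\<in>LX X. Lsupp \<mu> \<subseteq> F \<and> (\<forall>x. \<bar>\<mu> x\<bar> \<le> M)}" using FM(3) by (rule subsetD[rotated])
      hence m: "\<mu> \<in> LX X" "Lsupp \<mu> \<subseteq> F" "\<forall>x. \<bar>\<mu> x\<bar> \<le> M" by simp_all
      have a1: "\<alpha> 1 = k" and a0: "\<alpha> 0 = N" unfolding \<alpha>_def by simp_all
      have "\<bar>\<mu> x\<bar> \<le> real (\<alpha> 1)" for x using m(3) k unfolding a1 by (meson order_trans)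
      hence "\<forall>x. \<bar>\<mu> x\<bar> \<le> real (\<alpha> 1)" by blast
      moreover have "Lsupp \<mu> \<subseteq> Fs (\<alpha> 0)" unfolding a0 using m(2) N by (rule order_trans)
      ultimately show "\<mu> \<in> B \<alpha>" unfolding B_def using m(1) by blast
    qed
    thus ?thesis by blast
  qed
  have Bcov: "(\<Union>\<alpha>. B \<alpha>) = LX X"
  proof
    show "(\<Union>\<alpha>. B \<alpha>) \<subseteq> LX X" unfolding B_def by blast
  next
    show "LX X \<subseteq> (\<Union>\<alpha>. B \<alpha>)"
    proof
      fix \<mu> assume \<mu>: "\<mu> \<in> LX X"
      define M where "M = (\<Sum>x\<in>Lsupp \<mu>. \<bar>\<mu> x\<bar>)"
      have fin: "finite (Lsupp \<mu>)" using \<mu> LX_fin by blast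
      have "\<bar>\<mu> x\<bar> \<le> M" for x
      proof (cases "x \<in> Lsupp \<mu>")
        case True then show ?thesis unfolding M_def using fin by (intro member_le_sum) auto
      next
        case False then show ?thesis unfolding M_def Lsupp_def by (simp add: sum_nonneg)
      qed
      hence "{\<mu>} \<subseteq> {\<nu>\<in>LX X. Lsupp \<nu> \<subseteq> Lsupp \<mu> \<and> (\<forall>x. \<bar>\<nu> x\<bar> \<le> M)}" using \<mu> by auto
      hence "Lbeta_bounded X {\<mu>}"
        using Lbeta_bounded_subset K_bounded[OF fin LX_subset[OF \<mu>]] by blast
      then obtain \<alpha> where "{\<mu>} \<subseteq> B \<alpha>" using Bfund by blast
      thus "\<mu> \<in> (\<Union>\<alpha>. B \<alpha>)" by blast
    qed
  qed
  have "Lbeta_fundamental_bounded_resolution X B"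
    unfolding Lbeta_fundamental_bounded_resolution_def Lbeta_bounded_resolution_def
  proof (intro conjI allI impI)
    fix \<alpha> show "Lbeta_bounded X (B \<alpha>)" by (rule Bb)
  next
    show "(\<Union>\<alpha>. B \<alpha>) = LX X" by (rule Bcov)
  next
    fix \<alpha> \<beta> :: "nat \<Rightarrow> nat" assume "\<forall>n. \<alpha> n \<le> \<beta> n" thus "B \<alpha> \<subseteq> B \<beta>" by (rule Bmono)
  next
    fix S assume "Lbeta_bounded X S" thus "\<exists>\<alpha>. S \<subseteq> B \<alpha>" by (rule Bfund)
  qed
  thus ?thesis by blast
qed



lemma res_imp_count:
  assumes T: "tychonoff_space X" and R: "Lbeta_bounded_resolution X B"
  shows "countable (topspace X)"
proof (rule ccontr)
  assume unc: "uncountable (topspace X)"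
  define Ts where "Ts = topspace X"
  define \<delta> where "\<delta> = (\<lambda>y::'a. \<lambda>x. if x = y then (1::real) else 0)"
  have Ld: "Lsupp (\<delta> y) = {y}" for y unfolding Lsupp_def \<delta>_def by auto
  have dL: "\<delta> y \<in> LX X" if "y \<in> Ts" for y unfolding LX_def using that Ts_def by (simp add: Ld)
  have R': "(\<forall>a. Lbeta_bounded X (B a)) \<and> (\<Union>a. B a) = LX X \<and> (\<forall>a b. (\<forall>n. a n \<le> b n) \<longrightarrow> B a \<subseteq> B b)"
    using R unfolding Lbeta_bounded_resolution_def .
  have Bb: "\<And>a. Lbeta_bounded X (B a)" using R' by blast
  have Bc: "(\<Union>a. B a) = LX X" using R' by blast
  have Bm: "\<And>a b. (\<forall>n. a n \<le> b n) \<Longrightarrow> B a \<subseteq> B b" using R' by blast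
  have "\<forall>y\<in>Ts. \<exists>a. \<delta> y \<in> B a" using dL Bc by blast
  then obtain al where al0: "\<forall>y\<in>Ts. \<delta> y \<in> B (al y)" by (rule bchoice[THEN exE])
  have al: "\<And>y. y \<in> Ts \<Longrightarrow> \<delta> y \<in> B (al y)" using al0 by blast
  define K where "K = (\<lambda>S n. LEAST j::nat. uncountable {x\<in>S. al x n \<le> j})"
  define P where "P = rec_nat Ts (\<lambda>n S. {x\<in>S. al x n \<le> K S n})"
  have P0: "P 0 = Ts" and PS: "\<And>n. P (Suc n) = {x\<in>P n. al x n \<le> K (P n) n}"
    unfolding P_def by simp_all
  have Punc: "uncountable (P n)" for n
  proof (induction n)
    case 0 then show ?case using unc P0 Ts_def by simp
  next
    case (Suc n)
    have "P n = (\<Union>j. {x\<in>P n. al x n \<le> j})" by auto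
    have "\<exists>j. uncountable {x\<in>P n. al x n \<le> j}"
    proof (rule ccontr)
      assume "\<not> (\<exists>j. uncountable {x\<in>P n. al x n \<le> j})"
      hence "\<And>j. countable {x\<in>P n. al x n \<le> j}" by blast
      hence "countable (\<Union>j. {x\<in>P n. al x n \<le> j})" by (intro countable_UN) simp_all
      thus False using Suc.IH \<open>P n = (\<Union>j. {x\<in>P n. al x n \<le> j})\<close> by simp
    qed
    hence "uncountable {x\<in>P n. al x n \<le> K (P n) n}" unfolding K_def by (rule LeastI_ex)
    then show ?case using PS by simp
  qed
  have Pdec: "P (Suc n) \<subseteq> P n" for n using PS by auto
  have PT: "P n \<subseteq> Ts" for n
    by (induction n) (use P0 Pdec in auto)
  have Pbound: "x \<in> P n \<Longrightarrow> i < n \<Longrightarrow> al x i \<le> K (P i) i" for x n i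
  proof (induction n arbitrary: i)
    case 0 then show ?case by simp
  next
    case (Suc n)
    have xn: "x \<in> P n" and xa: "al x n \<le> K (P n) n" using Suc.prems(1) PS[of n] by auto
    show ?case
    proof (cases "i = n")
      case True then show ?thesis using xa by simp
    next
      case False then have "i < n" using Suc.prems(2) by linarith
      then show ?thesis using Suc.IH xn by blast
    qed
  qed
  define Q where "Q = rec_nat {} (\<lambda>n Q. insert (SOME y. y \<in> P (Suc n) \<and> y \<notin> Q) Q)"
  have Q0: "Q 0 = {}" and QS: "\<And>n. Q (Suc n) = insert (SOME y. y \<in> P (Suc n) \<and> y \<notin> Q n) (Q n)"
    unfolding Q_def by simp_all
  have Qfin: "finite (Q n)" for n by (induction n) (simp_all add: Q0 QS)
  have new: "(SOME y. y \<in> P (Suc n) \<and> y \<notin> Q n) \<in> P (Suc n) - Q n" for n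
  proof -
    have "infinite (P (Suc n))" using Punc[of "Suc n"] countable_finite by blast
    hence "infinite (P (Suc n) - Q n)" using Qfin[of n] by (rule Diff_infinite_finite[rotated])
    hence "P (Suc n) - Q n \<noteq> {}" by (metis finite.emptyI)
    hence "\<exists>y. y \<in> P (Suc n) \<and> y \<notin> Q n" by blast
    hence "(SOME y. y \<in> P (Suc n) \<and> y \<notin> Q n) \<in> P (Suc n) \<and> (SOME y. y \<in> P (Suc n) \<and> y \<notin> Q n) \<notin> Q n"
      by (rule someI_ex)
    thus ?thesis by blast
  qed
  have Qcard: "card (Q n) = n" for n
  proof (induction n)
    case 0 then show ?case by (simp add: Q0)
  next
    case (Suc n) then show ?case using new[of n] Qfin[of n] by (simp add: QS)
  qed
  have Qmono: "Q m \<subseteq> Q n" if "m \<le> n" for m n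
    using that
  proof (induction n)
    case 0 then show ?case by simp
  next
    case (Suc n)
    show ?case
    proof (cases "m = Suc n")
      case False
      then have "m \<le> n" using Suc.prems by linarith
      then show ?thesis using Suc.IH QS[of n] by blast
    qed simp
  qed
  have Qmem: "\<exists>m<n. y \<in> P (Suc m) \<and> y \<in> Q (Suc m)" if "y \<in> Q n" for y n
    using that
  proof (induction n)
    case 0 then show ?case by (simp add: Q0)
  next
    case (Suc n)
    show ?case
    proof (cases "y \<in> Q n")
      case True
      then obtain m where "m < n" "y \<in> P (Suc m) \<and> y \<in> Q (Suc m)" using Suc.IH by blast
      then show ?thesis using less_SucI by blast
    next
      case False
      then have "y = (SOME y. y \<in> P (Suc n) \<and> y \<notin> Q n)" using Suc.prems QS[of n] by blast
      then have "y \<in> P (Suc n)" using new[of n] by blast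
      moreover have "y \<in> Q (Suc n)" using Suc.prems .
      ultimately show ?thesis by blast
    qed
  qed
  define \<beta> where "\<beta> = (\<lambda>i. max (K (P i) i) (Max (insert 0 ((\<lambda>y. al y i) ` Q i))))"
  define D where "D = (\<Union>n. Q n)"
  have dom: "\<forall>i. al y i \<le> \<beta> i" if y: "y \<in> D" for y
  proof
    fix i
    obtain n where "y \<in> Q n" using y unfolding D_def by blast
    then obtain m where m: "y \<in> P (Suc m)" "y \<in> Q (Suc m)" using Qmem by blast
    show "al y i \<le> \<beta> i"
    proof (cases "i \<le> m")
      case True
      then have "al y i \<le> K (P i) i" using Pbound[OF m(1)] by simp
      then show ?thesis unfolding \<beta>_def by simp
    next
      case False
      then have "y \<in> Q i" using Qmono[of "Suc m" i] m(2) by auto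
      then have "al y i \<in> insert 0 ((\<lambda>y. al y i) ` Q i)" by blast
      then have "al y i \<le> Max (insert 0 ((\<lambda>y. al y i) ` Q i))" using Qfin[of i] by (intro Max_ge) simp_all
      then show ?thesis unfolding \<beta>_def by simp
    qed
  qed
  have DT: "D \<subseteq> Ts"
  proof
    fix y assume "y \<in> D"
    then obtain n where "y \<in> Q n" unfolding D_def by blast
    then obtain m where "y \<in> P (Suc m)" using Qmem by blast
    thus "y \<in> Ts" using PT by blast
  qed
  have sub: "D \<subseteq> (\<Union>\<mu>\<in>B \<beta>. Lsupp \<mu>)"
  proof
    fix y assume y: "y \<in> D"
    have "\<delta> y \<in> B (al y)" using al DT y by blast
    hence "\<delta> y \<in> B \<beta>" using Bm[OF dom[OF y]] by blast
    thus "y \<in> (\<Union>\<mu>\<in>B \<beta>. Lsupp \<mu>)" using Ld by blast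
  qed
  have "finite D" using finite_subset[OF sub bnd_fin[OF T Bb]] .
  moreover have "Q (Suc (card D)) \<subseteq> D" unfolding D_def by blast
  ultimately have "card (Q (Suc (card D))) \<le> card D" by (rule card_mono)
  thus False using Qcard by simp
qed


theorem proposition3p7:
  fixes X :: "'a topology"
  assumes "tychonoff_space X"
  shows "((\<exists>B. Lbeta_bounded_resolution X B) \<longleftrightarrow>
           (\<exists>B. Lbeta_fundamental_bounded_resolution X B))
       \<and> ((\<exists>B. Lbeta_fundamental_bounded_resolution X B) \<longleftrightarrow>
           countable (topspace X))"
proof -
  have f2r: "\<exists>B. Lbeta_bounded_resolution X B" if "\<exists>B. Lbeta_fundamental_bounded_resolution X B"
    using that unfolding Lbeta_fundamental_bounded_resolution_def by blast
  have r2c: "countable (topspace X)" if "\<exists>B. Lbeta_bounded_resolution X B"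
    using that res_imp_count[OF assms] by blast
  have c2f: "\<exists>B. Lbeta_fundamental_bounded_resolution X B" if "countable (topspace X)"
    using count_imp_fund[OF assms that] .
  show ?thesis
  proof (intro conjI iffI)
    assume "\<exists>B. Lbeta_bounded_resolution X B"
    thus "\<exists>B. Lbeta_fundamental_bounded_resolution X B" by (intro c2f r2c)
  next
    assume "\<exists>B. Lbeta_fundamental_bounded_resolution X B"
    thus "\<exists>B. Lbeta_bounded_resolution X B" by (rule f2r)
  next
    assume "\<exists>B. Lbeta_fundamental_bounded_resolution X B"
    thus "countable (topspace X)" by (intro r2c f2r)
  next
    assume "countable (topspace X)"
    thus "\<exists>B. Lbeta_fundamental_bounded_resolution X B" by (rule c2f)
  qed
qed

end
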